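(* Let $\mathfrak m\in\mathbf R$, $\overline{\mathfrak m}=\max\{\mathfrak m,0\}$, $\lambda>0$, $\varepsilon>0$, $t>0$ and $m\ge1$ an integer. Define, with the convention $s_{m+1}=s_1$, $$\Phi_m(s_1,\dots,s_m)=\prod_{k=1}^m\frac{\lambda^2e^{\mathfrak m(s_k+s_{k+1})}}{2\pi(s_k+s_{k+1}+2\varepsilon^2)}.$$ Then $$\int_{[0,t]^m}\Phi_m(s_1,\dots,s_m)\,ds_1\cdots ds_m\le\frac{(\lambda e^{\overline{\mathfrak m}t})^{2m}}{2^m\pi}\log\Big(1+\frac{t}{\varepsilon^2}\Big).$$ *)

theory Defs
  imports "HOL-Analysis.Analysis"
begin

text \<open>The integrand Phi_m, with indices 1..m shifted to 0..m-1 and the cyclic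
convention s_(m+1) = s_1 realised by taking the index (k+1) mod m.\<close>
definition Phi :: "real \<Rightarrow> real \<Rightarrow> real \<Rightarrow> nat \<Rightarrow> (nat \<Rightarrow> real) \<Rightarrow> real" where
  "Phi lam mm eps m s =
     (\<Prod>k<m. lam\<^sup>2 * exp (mm * (s k + s ((k + 1) mod m)))
              / (2 * pi * (s k + s ((k + 1) mod m) + 2 * eps\<^sup>2)))"

end

theory Submission
  imports Defs
begin
definition KK :: "real \<Rightarrow> real \<Rightarrow> real \<Rightarrow> real" where "KK c x y = 1 / (x + y + 2*c)"
definition ww :: "real \<Rightarrow> real \<Rightarrow> real" where "ww c y = 1 / sqrt (y + c)"

lemma deriv_step:
  fixes c v y :: real
  assumes "c > 0" "v \<ge> 0" "y > - c"
  shows "((\<lambda>y. 2 / sqrt (v+c) * arctan (sqrt ((y+c)/(v+c)))) has_real_derivative KK c v y * ww c y) (at y)"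
proof -
  have X: "v + c > 0" using assms by simp
  have Y: "y + c > 0" using assms by simp
  have "((\<lambda>y. 2 / sqrt (v+c) * arctan (sqrt ((y+c)/(v+c)))) has_real_derivative
     2 / sqrt (v+c) * (inverse (1 + (sqrt ((y+c)/(v+c)))\<^sup>2) * (inverse (sqrt ((y+c)/(v+c))) / 2 * (1/(v+c))))) (at y)"
  proof -
    have g: "((\<lambda>y. (y+c)/(v+c)) has_real_derivative 1/(v+c)) (at y)"
      using X by (auto intro!: derivative_eq_intros)
    have s: "((\<lambda>y. sqrt ((y+c)/(v+c))) has_real_derivative inverse (sqrt ((y+c)/(v+c))) / 2 * (1/(v+c))) (at y)"
      by (rule DERIV_chain2[OF DERIV_real_sqrt g]) (use X Y in \<open>simp add: field_simps\<close>)
    have at: "((\<lambda>y. arctan (sqrt ((y+c)/(v+c)))) has_real_derivative inverse (1 + (sqrt ((y+c)/(v+c)))\<^sup>2) * (inverse (sqrt ((y+c)/(v+c))) / 2 * (1/(v+c)))) (at y)"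
      by (rule DERIV_chain2[OF DERIV_arctan s])
    show ?thesis by (rule DERIV_cmult[OF at])
  qed
  moreover have "2 / sqrt (v+c) * (inverse (1 + (sqrt ((y+c)/(v+c)))\<^sup>2) * (inverse (sqrt ((y+c)/(v+c))) / 2 * (1/(v+c)))) = KK c v y * ww c y"
  proof -
    define a where "a = sqrt (v+c)"
    define b where "b = sqrt (y+c)"
    have a: "a > 0" "a^2 = v + c" using X by (auto simp: a_def)
    have b: "b > 0" "b^2 = y + c" using Y by (auto simp: b_def)
    have q: "sqrt ((y+c)/(v+c)) = b / a" by (simp add: a_def b_def real_sqrt_divide)
    have e: "2 / a * (inverse (1 + (b/a)\<^sup>2) * (inverse (b/a) / 2 * (1/a^2))) = 1 / (a^2 + b^2) * (1 / b)"
    proof -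
      have p: "a^2 + b^2 > 0" using a(1) b(1) by (simp add: add_pos_pos)
      have i: "inverse (1 + (b/a)\<^sup>2) = a^2/(a^2+b^2)" using a(1) p by (simp add: field_simps)
      have r: "\<And>X::real. 2/(2*X) = 1/X" by simp
      have q: "a * (a * (b * 2)) + b * (b * (b * 2)) = 2 * (a * (a * b) + b * (b * b))" by algebra
      show ?thesis unfolding i using a(1) b(1) p apply (simp add: field_simps power2_eq_square)
        apply (subst q) by (rule r)
    qed
    have k: "KK c v y * ww c y = 1 / (a^2 + b^2) * (1 / b)"
      unfolding KK_def ww_def a(2) b(2) b_def using Y by (simp add: algebra_simps)
    have sa: "sqrt (v+c) = a" by (simp add: a_def)
    show ?thesis unfolding k q sa by (subst a(2)[symmetric], rule e)
  qed
  ultimately show ?thesis by simp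
qed

lemma step_int:
  fixes c v t :: real
  assumes "c > 0" "v \<ge> 0" "t \<ge> 0"
  shows "(\<integral>\<^sup>+y. ennreal (KK c v y * ww c y) * indicator {0..t} y \<partial>lborel) \<le> ennreal (pi * ww c v)"
proof -
  define F where "F = (\<lambda>y. 2 / sqrt (v+c) * arctan (sqrt ((y+c)/(v+c))))"
  have eq: "(\<integral>\<^sup>+y. ennreal (KK c v y * ww c y) * indicator {0..t} y \<partial>lborel) = ennreal (F t - F 0)"
    unfolding F_def
    apply (rule nn_integral_FTC_Icc)
    subgoal unfolding KK_def ww_def by measurable
    subgoal for y using deriv_step[of c v y] assms by auto
    subgoal for y using assms by (auto simp: KK_def ww_def)
    using assms by auto
  have "F t - F 0 \<le> F t"
    using assms by (auto simp: F_def intro!: mult_nonneg_nonneg )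
  also have "F t \<le> pi * ww c v"
    using assms arctan_ubound[of "sqrt ((t+c)/(v+c))"] by (simp add: F_def ww_def divide_simps)
  finally have "F t - F 0 \<le> pi * ww c v" .
  then show ?thesis using eq ennreal_leI by (metis)
qed

fun chain :: "real \<Rightarrow> real \<Rightarrow> nat list \<Rightarrow> (nat \<Rightarrow> real) \<Rightarrow> real" where
  "chain c v [] x = ww c v"
| "chain c v (j#js) x = KK c v (x j) * chain c (x j) js x"

definition Box :: "real \<Rightarrow> nat set \<Rightarrow> (nat \<Rightarrow> real) set" where
  "Box t A = {x. \<forall>i\<in>A. x i \<in> {0..t}}"

lemma chain_upd: "j \<notin> set js \<Longrightarrow> chain c v js (x(j:=y)) = chain c v js x"
  by (induction js arbitrary: v) auto

lemma chain_nonneg: "c > 0 \<Longrightarrow> v \<ge> 0 \<Longrightarrow> (\<forall>i\<in>set js. x i \<ge> 0) \<Longrightarrow> chain c v js x \<ge> 0"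
  by (induction js arbitrary: v) (auto simp: KK_def ww_def)

lemma chain_meas:
  assumes "set js \<subseteq> I" "g \<in> borel_measurable (PiM I (\<lambda>_. lborel))"
  shows "(\<lambda>x. chain c (g x) js x) \<in> borel_measurable (PiM I (\<lambda>_. lborel))"
  using assms
proof (induction js arbitrary: g)
  case Nil
  have [measurable]: "g \<in> borel_measurable (PiM I (\<lambda>_. lborel))" by fact
  show ?case unfolding chain.simps ww_def by measurable
next
  case (Cons j js)
  have [measurable]: "g \<in> borel_measurable (PiM I (\<lambda>_. lborel))" by fact
  have j: "j \<in> I" using Cons by simp
  have [measurable]: "(\<lambda>x. x j) \<in> borel_measurable (PiM I (\<lambda>_. lborel))"
    using j by measurable
  have [measurable]: "(\<lambda>x. chain c (x j) js x) \<in> borel_measurable (PiM I (\<lambda>_. lborel))"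
    using Cons by auto
  show ?case unfolding chain.simps KK_def by measurable
qed

lemma Box_meas[measurable]:
  assumes "finite A" "A \<subseteq> I"
  shows "(\<lambda>x. indicator (Box t A) x :: ennreal) \<in> borel_measurable (PiM I (\<lambda>_. lborel))"
proof -
  have [measurable]: "Measurable.pred (PiM I (\<lambda>_. lborel)) (\<lambda>x. \<forall>i\<in>A. x i \<in> {0..t})"
    using assms by measurable (use assms in auto)
  have e: "(\<lambda>x. indicator (Box t A) x :: ennreal) = (\<lambda>x. if \<forall>i\<in>A. x i \<in> {0..t} then 1 else 0)"
    by (auto simp: Box_def indicator_def fun_eq_iff)
  show ?thesis unfolding e by measurable
qed

lemma chain_bound:
  assumes c: "c > 0" and t: "t \<ge> 0"
  shows "distinct js \<Longrightarrow> v \<ge> 0 \<Longrightarrow>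
    (\<integral>\<^sup>+x. ennreal (chain c v js x) * indicator (Box t (set js)) x \<partial>PiM (set js) (\<lambda>_. lborel))
      \<le> ennreal (pi ^ length js * ww c v)"
proof (induction js arbitrary: v)
  case Nil
  have "(\<integral>\<^sup>+x. ennreal (chain c v [] x) * indicator (Box t (set [])) x \<partial>PiM (set []) (\<lambda>_. lborel)) = ennreal (ww c v)"
    by (simp add: PiM_empty Box_def nn_integral_count_space_finite)
  then show ?case by simp
next
  case (Cons j js)
  interpret product_sigma_finite "\<lambda>_::nat. lborel::real measure" by standard
  let ?M = "PiM (set js) (\<lambda>_. lborel::real measure)"
  have jn: "j \<notin> set js" and dj: "distinct js" using Cons.prems by auto
  have [measurable]: "(\<lambda>x. chain c v (j#js) x) \<in> borel_measurable (PiM (insert j (set js)) (\<lambda>_. lborel))"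
    by (rule chain_meas) auto
  have [measurable]: "(\<lambda>x. chain c (x j) js x) \<in> borel_measurable (PiM (set js) (\<lambda>_. lborel))" if "j \<in> set js" for j
    by (rule chain_meas) (use that in auto)
  have "(\<integral>\<^sup>+x. ennreal (chain c v (j#js) x) * indicator (Box t (set (j#js))) x \<partial>PiM (set (j#js)) (\<lambda>_. lborel))
      = (\<integral>\<^sup>+y. \<integral>\<^sup>+x. ennreal (chain c v (j#js) (x(j:=y))) * indicator (Box t (set (j#js))) (x(j:=y)) \<partial>?M \<partial>lborel)"
    unfolding list.set(2)
  proof (rule product_nn_integral_insert_rev)
    have m1: "(\<lambda>x. ennreal (chain c v (j#js) x)) \<in> borel_measurable (PiM (insert j (set js)) (\<lambda>_. lborel))"
      by measurable
    have m2: "(\<lambda>x. indicator (Box t (insert j (set js))) x :: ennreal) \<in> borel_measurable (PiM (insert j (set js)) (\<lambda>_. lborel))"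
      by (rule Box_meas) auto
    show "(\<lambda>x. ennreal (chain c v (j#js) x) * indicator (Box t (insert j (set js))) x) \<in> borel_measurable (PiM (insert j (set js)) (\<lambda>_. lborel))"
      using m1 m2 by (rule borel_measurable_times_ennreal)
  qed (use jn in auto)
  also have "\<dots> = (\<integral>\<^sup>+y. ennreal (KK c v y) * indicator {0..t} y *
        (\<integral>\<^sup>+x. ennreal (chain c y js x) * indicator (Box t (set js)) x \<partial>?M) \<partial>lborel)"
  proof (rule nn_integral_cong)
    fix y :: real
    have [measurable]: "(\<lambda>x. chain c y js x) \<in> borel_measurable ?M"
      by (rule chain_meas) auto
    have "(\<integral>\<^sup>+x. ennreal (chain c v (j#js) (x(j:=y))) * indicator (Box t (set (j#js))) (x(j:=y)) \<partial>?M)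
        = (\<integral>\<^sup>+x. ennreal (KK c v y) * indicator {0..t} y * (ennreal (chain c y js x) * indicator (Box t (set js)) x) \<partial>?M)"
    proof (rule nn_integral_cong)
      fix x :: "nat \<Rightarrow> real"
      show "ennreal (chain c v (j#js) (x(j:=y))) * indicator (Box t (set (j#js))) (x(j:=y))
          = ennreal (KK c v y) * indicator {0..t} y * (ennreal (chain c y js x) * indicator (Box t (set js)) x)"
      proof (cases "y \<in> {0..t} \<and> x \<in> Box t (set js)")
        case True
        have "KK c v y \<ge> 0" using True Cons.prems c by (auto simp: KK_def)
        moreover have "x(j:=y) \<in> Box t (set (j#js))" using True by (auto simp: Box_def)
        ultimately show ?thesis using True jn by (simp add: chain_upd ennreal_mult')
      next
        case False
        then have "x(j:=y) \<notin> Box t (set (j#js))" using jn by (auto simp: Box_def)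
        then show ?thesis using False by auto
      qed
    qed
    also have "\<dots> = ennreal (KK c v y) * indicator {0..t} y *
        (\<integral>\<^sup>+x. ennreal (chain c y js x) * indicator (Box t (set js)) x \<partial>?M)"
      by (rule nn_integral_cmult) measurable
    finally show "(\<integral>\<^sup>+x. ennreal (chain c v (j#js) (x(j:=y))) * indicator (Box t (set (j#js))) (x(j:=y)) \<partial>?M)
       = ennreal (KK c v y) * indicator {0..t} y *
        (\<integral>\<^sup>+x. ennreal (chain c y js x) * indicator (Box t (set js)) x \<partial>?M)" .
  qed
  also have "\<dots> \<le> (\<integral>\<^sup>+y. ennreal (pi ^ length js) * (ennreal (KK c v y * ww c y) * indicator {0..t} y) \<partial>lborel)"
  proof (rule nn_integral_mono)
    fix y :: real
    show "ennreal (KK c v y) * indicator {0..t} y *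
        (\<integral>\<^sup>+x. ennreal (chain c y js x) * indicator (Box t (set js)) x \<partial>?M)
       \<le> ennreal (pi ^ length js) * (ennreal (KK c v y * ww c y) * indicator {0..t} y)"
    proof (cases "y \<in> {0..t}")
      case True
      have K: "KK c v y \<ge> 0" using True Cons.prems c by (auto simp: KK_def)
      have W: "ww c y \<ge> 0" using True c by (auto simp: ww_def)
      have "ennreal (KK c v y) * (\<integral>\<^sup>+x. ennreal (chain c y js x) * indicator (Box t (set js)) x \<partial>?M)
          \<le> ennreal (KK c v y) * ennreal (pi ^ length js * ww c y)"
        by (rule mult_left_mono) (use Cons.IH[OF dj] True in auto)
      also have "\<dots> = ennreal (pi ^ length js) * ennreal (KK c v y * ww c y)"
        using K W by (simp add: ennreal_mult'[symmetric] mult_ac)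
      finally show ?thesis using True by simp
    qed simp
  qed
  also have "\<dots> = ennreal (pi ^ length js) * (\<integral>\<^sup>+y. ennreal (KK c v y * ww c y) * indicator {0..t} y \<partial>lborel)"
    by (rule nn_integral_cmult) (simp add: KK_def ww_def)
  also have "\<dots> \<le> ennreal (pi ^ length js) * ennreal (pi * ww c v)"
    by (rule mult_left_mono) (use step_int[OF c Cons.prems(2) t] in auto)
  also have "\<dots> = ennreal (pi ^ length (j#js) * ww c v)"
    by (simp add: ennreal_mult'[symmetric] mult_ac)
  finally show ?case .
qed

lemma KK_sym: "KK c a b = KK c b a" by (simp add: KK_def add_ac)

lemma chain_rev: "chain c (s n) (rev [0..<n]) s = (\<Prod>k<n. KK c (s k) (s (k+1))) * ww c (s 0)"
  by (induction n) (auto simp: KK_sym mult_ac)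

lemma KK_le: assumes "c > 0" "a \<ge> 0" "b \<ge> 0" shows "KK c a b \<le> ww c a * ww c b / 2"
proof -
  define x where "x = sqrt (a + c)"
  define y where "y = sqrt (b + c)"
  have x: "x > 0" "x^2 = a + c" using assms by (auto simp: x_def)
  have y: "y > 0" "y^2 = b + c" using assms by (auto simp: y_def)
  have "2 * x * y \<le> x^2 + y^2" using sum_squares_bound[of x y] by simp
  then have "1 / (x^2 + y^2) \<le> 1 / (2 * x * y)"
    using x y assms by (intro divide_left_mono) (auto intro!: mult_pos_pos add_pos_pos)
  then show ?thesis unfolding KK_def ww_def x_def[symmetric] y_def[symmetric]
    using x y by (simp add: algebra_simps)
qed

lemma prod_cyc:
  "(\<Prod>k<Suc n. f (s k) (s ((k + 1) mod Suc n))) = (\<Prod>k<n. f (s k) (s (k+1))) * f (s n) (s 0)"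
  by (simp add: prod.lessThan_Suc)

lemma pointwise:
  fixes mm lam eps t :: real and n :: nat
  assumes "lam > 0" "eps > 0" "t > 0" and s: "\<forall>i<Suc n. s i \<in> {0..t}"
  defines "A \<equiv> lam\<^sup>2 * exp (2 * max mm 0 * t) / (2 * pi)"
  shows "Phi lam mm eps (Suc n) s \<le> A ^ Suc n / 2 * (ww (eps\<^sup>2) (s n) * chain (eps\<^sup>2) (s n) (rev [0..<n]) s)"
proof -
  define c where "c = eps\<^sup>2"
  have c: "c > 0" using assms by (simp add: c_def)
  have A0: "A \<ge> 0" unfolding A_def by simp
  have fac: "lam\<^sup>2 * exp (mm * (a + b)) / (2 * pi * (a + b + 2 * eps\<^sup>2)) \<le> A * KK c a b"
    if "a \<in> {0..t}" "b \<in> {0..t}" for a b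
  proof -
    have "mm * (a + b) \<le> max mm 0 * (a + b)" using that by (intro mult_right_mono) auto
    also have "\<dots> \<le> max mm 0 * (2 * t)" using that by (intro mult_left_mono) auto
    finally have "exp (mm * (a + b)) \<le> exp (2 * max mm 0 * t)" by simp
    moreover have "lam\<^sup>2 * exp (mm * (a + b)) / (2 * pi * (a + b + 2 * eps\<^sup>2)) = lam\<^sup>2 * exp (mm * (a + b)) / (2 * pi) * KK c a b"
      by (simp add: KK_def c_def)
    moreover have "KK c a b \<ge> 0" using that c by (simp add: KK_def)
    ultimately have "lam\<^sup>2 * exp (mm * (a + b)) / (2 * pi) \<le> A"
      unfolding A_def by (intro divide_right_mono mult_left_mono) auto
    then show ?thesis using \<open>KK c a b \<ge> 0\<close> \<open>_ = lam\<^sup>2 * exp (mm * (a + b)) / (2 * pi) * KK c a b\<close>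
      by (metis mult_right_mono)
  qed
  have "Phi lam mm eps (Suc n) s \<le> (\<Prod>k<Suc n. A * KK c (s k) (s ((k + 1) mod Suc n)))"
    unfolding Phi_def
  proof (rule prod_mono)
    fix k assume k: "k \<in> {..<Suc n}"
    have "(k + 1) mod Suc n < Suc n" by simp
    then have "s k \<in> {0..t}" "s ((k + 1) mod Suc n) \<in> {0..t}" using s k by auto
    then show "0 \<le> lam\<^sup>2 * exp (mm * (s k + s ((k + 1) mod Suc n))) / (2 * pi * (s k + s ((k + 1) mod Suc n) + 2 * eps\<^sup>2)) \<and>
      lam\<^sup>2 * exp (mm * (s k + s ((k + 1) mod Suc n))) / (2 * pi * (s k + s ((k + 1) mod Suc n) + 2 * eps\<^sup>2))
       \<le> A * KK c (s k) (s ((k + 1) mod Suc n))"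
      using fac by auto
  qed
  also have "\<dots> = A ^ Suc n * (\<Prod>k<Suc n. KK c (s k) (s ((k + 1) mod Suc n)))"
    by (simp add: prod.distrib)
  also have "(\<Prod>k<Suc n. KK c (s k) (s ((k + 1) mod Suc n))) = (\<Prod>k<n. KK c (s k) (s (k+1))) * KK c (s n) (s 0)"
    by (rule prod_cyc)
  also have "\<dots> \<le> (\<Prod>k<n. KK c (s k) (s (k+1))) * (ww c (s n) * ww c (s 0) / 2)"
    using s c by (intro mult_left_mono KK_le prod_nonneg) (auto simp: KK_def)
  also have "\<dots> = (ww c (s n) * chain c (s n) (rev [0..<n]) s) / 2"
    by (simp add: chain_rev)
  finally show ?thesis using A0 by (simp add: c_def mult_left_mono)
qed

lemma log_int:
  assumes "c > 0" "t \<ge> 0"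
  shows "(\<integral>\<^sup>+y. ennreal (1 / (y + c)) * indicator {0..t} y \<partial>lborel) = ennreal (ln (1 + t / c))"
proof -
  have "(\<integral>\<^sup>+y. ennreal (1 / (y + c)) * indicator {0..t} y \<partial>lborel) = ennreal (ln (t + c) - ln (0 + c))"
    apply (rule nn_integral_FTC_Icc)
    subgoal by measurable
    subgoal for y using assms by (auto intro!: derivative_eq_intros simp: field_simps)
    using assms by auto
  also have "ln (t + c) - ln (0 + c) = ln (1 + t / c)"
  proof -
    have "1 + t / c = (t + c) / c" using assms by (simp add: field_simps)
    then show ?thesis using assms by (simp add: ln_div)
  qed
  finally show ?thesis .
qed

theorem mainTheorem9:
  fixes mm lam eps t :: real and m :: nat
  assumes "lam > 0" and "eps > 0" and "t > 0" and "m \<ge> 1"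
  shows "(\<integral>\<^sup>+ s \<in> {s. \<forall>i<m. s i \<in> {0..t}}. ennreal (Phi lam mm eps m s)
            \<partial>(PiM {..<m} (\<lambda>_. lborel)))
         \<le> ennreal ((lam * exp (max mm 0 * t)) ^ (2 * m) / (2 ^ m * pi)
                    * ln (1 + t / eps\<^sup>2))"
proof -
  obtain n where m: "m = Suc n" using assms(4) by (cases m) auto
  define c where "c = eps\<^sup>2"
  have c: "c > 0" using assms by (simp add: c_def)
  define A where "A = lam\<^sup>2 * exp (2 * max mm 0 * t) / (2 * pi)"
  have A0: "A \<ge> 0" unfolding A_def by simp
  define js where "js = rev [0..<n]"
  have js: "set js = {..<n}" "distinct js" "length js = n" by (auto simp: js_def)
  interpret product_sigma_finite "\<lambda>_::nat. lborel::real measure" by standard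
  let ?M = "PiM {..<n} (\<lambda>_. lborel::real measure)"
  have [measurable]: "(\<lambda>x. chain c (x n) js x) \<in> borel_measurable (PiM (insert n {..<n}) (\<lambda>_. lborel))"
    by (rule chain_meas) (auto simp: js)
  have mset: "{..<m} = insert n {..<n}" by (auto simp: m)
  have boxeq: "{s. \<forall>i<m. s i \<in> {0..t}} = Box t (insert n {..<n})"
    by (auto simp: Box_def m less_Suc_eq)
  have "(\<integral>\<^sup>+ s \<in> {s. \<forall>i<m. s i \<in> {0..t}}. ennreal (Phi lam mm eps m s) \<partial>(PiM {..<m} (\<lambda>_. lborel)))
     \<le> (\<integral>\<^sup>+ s. ennreal (A ^ m / 2) * (ennreal (ww c (s n) * chain c (s n) js s) * indicator (Box t (insert n {..<n})) s)
          \<partial>(PiM (insert n {..<n}) (\<lambda>_. lborel)))"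
    unfolding boxeq mset
  proof (rule nn_integral_mono)
    fix s :: "nat \<Rightarrow> real"
    show "ennreal (Phi lam mm eps m s) * indicator (Box t (insert n {..<n})) s
       \<le> ennreal (A ^ m / 2) * (ennreal (ww c (s n) * chain c (s n) js s) * indicator (Box t (insert n {..<n})) s)"
    proof (cases "s \<in> Box t (insert n {..<n})")
      case True
      then have s: "\<forall>i<Suc n. s i \<in> {0..t}" by (auto simp: Box_def less_Suc_eq)
      have "Phi lam mm eps m s \<le> A ^ m / 2 * (ww c (s n) * chain c (s n) js s)"
        using pointwise[OF assms(1-3) s, of mm] unfolding m A_def c_def js_def .
      then have "ennreal (Phi lam mm eps m s) \<le> ennreal (A ^ m / 2) * ennreal (ww c (s n) * chain c (s n) js s)"
        using A0 by (simp add: ennreal_mult'[symmetric] ennreal_leI)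
      then show ?thesis using True by simp
    qed simp
  qed
  also have "\<dots> = ennreal (A ^ m / 2) * (\<integral>\<^sup>+ s. ennreal (ww c (s n) * chain c (s n) js s) * indicator (Box t (insert n {..<n})) s
          \<partial>(PiM (insert n {..<n}) (\<lambda>_. lborel)))"
    by (rule nn_integral_cmult) (auto intro!: borel_measurable_times_ennreal Box_meas simp: ww_def)
  also have "(\<integral>\<^sup>+ s. ennreal (ww c (s n) * chain c (s n) js s) * indicator (Box t (insert n {..<n})) s
          \<partial>(PiM (insert n {..<n}) (\<lambda>_. lborel)))
     = (\<integral>\<^sup>+y. \<integral>\<^sup>+x. ennreal (ww c ((x(n:=y)) n) * chain c ((x(n:=y)) n) js (x(n:=y))) * indicator (Box t (insert n {..<n})) (x(n:=y)) \<partial>?M \<partial>lborel)"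
    by (rule product_nn_integral_insert_rev) (auto intro!: borel_measurable_times_ennreal Box_meas simp: ww_def)
  also have "\<dots> \<le> (\<integral>\<^sup>+y. ennreal (pi ^ n) * (ennreal (1 / (y + c)) * indicator {0..t} y) \<partial>lborel)"
  proof (rule nn_integral_mono)
    fix y :: real
    have [measurable]: "(\<lambda>x. chain c y js x) \<in> borel_measurable ?M"
      by (rule chain_meas) (auto simp: js)
    show "(\<integral>\<^sup>+x. ennreal (ww c ((x(n:=y)) n) * chain c ((x(n:=y)) n) js (x(n:=y))) * indicator (Box t (insert n {..<n})) (x(n:=y)) \<partial>?M)
       \<le> ennreal (pi ^ n) * (ennreal (1 / (y + c)) * indicator {0..t} y)"
    proof (cases "y \<in> {0..t}")
      case True
      have W: "ww c y \<ge> 0" using True c by (auto simp: ww_def)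
      have "(\<integral>\<^sup>+x. ennreal (ww c ((x(n:=y)) n) * chain c ((x(n:=y)) n) js (x(n:=y))) * indicator (Box t (insert n {..<n})) (x(n:=y)) \<partial>?M)
          = (\<integral>\<^sup>+x. ennreal (ww c y) * (ennreal (chain c y js x) * indicator (Box t (set js)) x) \<partial>?M)"
      proof (rule nn_integral_cong)
        fix x :: "nat \<Rightarrow> real"
        have b: "(x(n:=y) \<in> Box t (insert n {..<n})) = (x \<in> Box t {..<n})"
          using True by (auto simp: Box_def)
        show "ennreal (ww c ((x(n:=y)) n) * chain c ((x(n:=y)) n) js (x(n:=y))) * indicator (Box t (insert n {..<n})) (x(n:=y))
            = ennreal (ww c y) * (ennreal (chain c y js x) * indicator (Box t (set js)) x)"
          using W b by (simp add: chain_upd js ennreal_mult' indicator_def)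
      qed
      also have "\<dots> = ennreal (ww c y) * (\<integral>\<^sup>+x. ennreal (chain c y js x) * indicator (Box t (set js)) x \<partial>?M)"
        unfolding js(1) by (rule nn_integral_cmult) (auto intro!: borel_measurable_times_ennreal Box_meas)
      also have "\<dots> \<le> ennreal (ww c y) * ennreal (pi ^ n * ww c y)"
        by (rule mult_left_mono) (use chain_bound[OF c _ js(2), of t y] True js in auto)
      also have "\<dots> = ennreal (pi ^ n) * ennreal (1 / (y + c))"
        using W True c by (simp add: ennreal_mult'[symmetric] ww_def mult_ac power2_eq_square[symmetric])
      finally show ?thesis using True by simp
    next
      case False
      then have "\<And>x. x(n:=y) \<notin> Box t (insert n {..<n})" by (auto simp: Box_def)
      then show ?thesis using False by simp
    qed
  qed
  also have "\<dots> = ennreal (pi ^ n) * ennreal (ln (1 + t / c))"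
    by (subst nn_integral_cmult) (auto simp: log_int[OF c] less_imp_le[OF assms(3)])
  finally have I0: "(\<integral>\<^sup>+ s \<in> {s. \<forall>i<m. s i \<in> {0..t}}. ennreal (Phi lam mm eps m s) \<partial>(PiM {..<m} (\<lambda>_. lborel)))
      \<le> ennreal (A ^ m / 2) * (ennreal (pi ^ n) * ennreal (ln (1 + t / c)))"
    by (meson mult_left_mono zero_le)
  have I: "(\<integral>\<^sup>+ s \<in> {s. \<forall>i<m. s i \<in> {0..t}}. ennreal (Phi lam mm eps m s) \<partial>(PiM {..<m} (\<lambda>_. lborel)))
      \<le> ennreal (A ^ m / 2 * pi ^ n * ln (1 + t / c))"
    using I0 A0 by (simp add: ennreal_mult'[symmetric] mult.assoc)
  have L: "ln (1 + t / c) \<ge> 0" using c assms(3) by simp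
  have key: "A ^ m * pi ^ n = (lam * exp (max mm 0 * t)) ^ (2 * m) / (2 ^ m * pi)"
  proof -
    have "A = (lam * exp (max mm 0 * t))\<^sup>2 / (2 * pi)"
      unfolding A_def by (simp add: power_mult_distrib exp_double[symmetric] mult.assoc)
    then have "A ^ m = (lam * exp (max mm 0 * t)) ^ (2 * m) / (2 ^ m * pi ^ m)"
      by (simp add: power_divide power_mult power_mult_distrib)
    then show ?thesis by (simp add: m field_simps)
  qed
  have "A ^ m / 2 * pi ^ n * ln (1 + t / c) \<le> A ^ m * pi ^ n * ln (1 + t / c)"
    using A0 L by (simp add: mult_right_mono mult_nonneg_nonneg)
  then show ?thesis using I unfolding key c_def
    by (meson ennreal_leI order_trans)
qed
end
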